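(* Let $d,k,j\ge1$. If there is no $\mathfrak W_k$-equivariant map $Y_{d,k}\to S(U_k^{\oplus j})$, then there is also no $\mathfrak W_k$-equivariant map $Y_{d-1,k}\to S\big(U_k^{\oplus(j-1)}\oplus\bigoplus_{\alpha\in B}V_\alpha\big)$.
   Context: $Y_{d,k}=(S^d)^k$ with $S^d\subset\mathbb{R}^{d+1}$, and $Y_{d-1,k}\subset Y_{d,k}$ is the subspace of tuples with each $x_i\perp e_{d+1}$ (product of equators). $\mathfrak W_k=(\mathbb{Z}/2)^k\rtimes\mathfrak S_k$ acts on $Y_{d,k}$ by $((\beta_1,\dots,\beta_k)\rtimes\tau)\cdot(v_1,\dots,v_k)=((-1)^{\beta_1}v_{\tau^{-1}(1)},\dots,(-1)^{\beta_k}v_{\tau^{-1}(k)})$. $U_k=\{(y_\gamma)_{\gamma\in(\mathbb{Z}/2)^k}:\sum_\gamma y_\gamma=0\}\subset\mathbb{R}^{(\mathbb{Z}/2)^k}$ with $\mathfrak W_k$ permuting coordinates via the action on indices $((\beta)\rtimes\tau)\cdot\gamma=(\beta_1+\gamma_{\tau^{-1}(1)},\dots,\beta_k+\gamma_{\tau^{-1}(k)})$ mod 2; $U_k^{\oplus j}$ carries the diagonal action, $S(\cdot)$ denotes the unit sphere. For $\alpha\in(\mathbb{Z}/2)^k\setminus\{0\}$, $V_\alpha\subset U_k$ is the line spanned by $((-1)^{\langle\alpha,\gamma\rangle})_{\gamma}$; as a $(\mathbb{Z}/2)^k$-representation $\beta$ acts on $V_\alpha$ by $(-1)^{\sum_i\alpha_i\beta_i}$,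 and $U_k=\bigoplus_{\alpha\ne0}V_\alpha$. $B\subset(\mathbb{Z}/2)^k$ is the set of $\alpha$ with at least two nonzero coordinates; $\bigoplus_{\alpha\in B}V_\alpha$ is a $\mathfrak W_k$-invariant subspace of $U_k$. *)

theory Defs
  imports "HOL-Analysis.Analysis" "HOL-Combinatorics.Permutations"
begin

text \<open>Points of R^(d+1) are functions nat => real supported in {0..d};
  coordinate d plays the role of e_(d+1).\<close>
definition sphere_pts :: "nat \<Rightarrow> (nat \<Rightarrow> real) set" where
  "sphere_pts d = {x. (\<forall>i>d. x i = 0) \<and> (\<Sum>i\<le>d. (x i)^2) = 1}"

text \<open>Y_(d,k) = (S^d)^k, tuples indexed by {0..<k}, extended by 0.\<close>
definition Yspace :: "nat \<Rightarrow> nat \<Rightarrow> (nat \<Rightarrow> nat \<Rightarrow> real) set" where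
  "Yspace d k = {v. (\<forall>i<k. v i \<in> sphere_pts d) \<and> (\<forall>i\<ge>k. v i = (\<lambda>_. 0))}"

text \<open>Y_(d-1,k) as the subspace of Y_(d,k) of tuples orthogonal to e_(d+1).\<close>
definition Yequator :: "nat \<Rightarrow> nat \<Rightarrow> (nat \<Rightarrow> nat \<Rightarrow> real) set" where
  "Yequator d k = {v \<in> Yspace d k. \<forall>i<k. v i d = 0}"

text \<open>The group W_k = (Z/2)^k \<rtimes> S_k; beta is encoded as the subset of {..<k}
  where beta_i = 1.\<close>
definition Wgroup :: "nat \<Rightarrow> (nat set \<times> (nat \<Rightarrow> nat)) set" where
  "Wgroup k = {(\<beta>, \<tau>). \<beta> \<subseteq> {..<k} \<and> \<tau> permutes {..<k}}"

definition sgn_bool :: "bool \<Rightarrow> real" where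
  "sgn_bool b = (if b then -1 else 1)"

definition actY :: "nat \<Rightarrow> nat set \<times> (nat \<Rightarrow> nat) \<Rightarrow> (nat \<Rightarrow> nat \<Rightarrow> real) \<Rightarrow> (nat \<Rightarrow> nat \<Rightarrow> real)" where
  "actY k g v = (\<lambda>i. if i < k then (\<lambda>t. sgn_bool (i \<in> fst g) * v (inv (snd g) i) t) else (\<lambda>_. 0))"

text \<open>Action on indices gamma in (Z/2)^k (encoded as subsets of {..<k}):
  (beta,tau).gamma = beta + tau(gamma), i.e. symmetric difference.\<close>
definition symdiff :: "nat set \<Rightarrow> nat set \<Rightarrow> nat set" where
  "symdiff A B = (A - B) \<union> (B - A)"

definition act_idx :: "nat set \<times> (nat \<Rightarrow> nat) \<Rightarrow> nat set \<Rightarrow> nat set" where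
  "act_idx g \<gamma> = symdiff (fst g) (snd g ` \<gamma>)"

text \<open>Elements of R^((Z/2)^k)^(oplus j): y l gamma for l<j, gamma subset {..<k};
  zero elsewhere. W_k permutes coordinates: (g.y)_(g.gamma) = y_gamma,
  diagonally on the j summands.\<close>
definition actU :: "nat \<Rightarrow> nat set \<times> (nat \<Rightarrow> nat) \<Rightarrow> (nat \<Rightarrow> nat set \<Rightarrow> real) \<Rightarrow> (nat \<Rightarrow> nat set \<Rightarrow> real)" where
  "actU k g y = (\<lambda>l \<gamma>. if \<gamma> \<subseteq> {..<k}
      then y l (THE \<delta>. \<delta> \<subseteq> {..<k} \<and> act_idx g \<delta> = \<gamma>) else 0)"

definition in_Uk :: "nat \<Rightarrow> (nat set \<Rightarrow> real) \<Rightarrow> bool" where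
  "in_Uk k z \<longleftrightarrow> (\<forall>\<gamma>. \<not> \<gamma> \<subseteq> {..<k} \<longrightarrow> z \<gamma> = 0) \<and> (\<Sum>\<gamma>\<in>Pow {..<k}. z \<gamma>) = 0"

text \<open>B = alphas with at least two nonzero coordinates; V_alpha spanned by
  ((-1)^<alpha,gamma>)_gamma.\<close>
definition Bset :: "nat \<Rightarrow> nat set set" where
  "Bset k = {\<alpha>. \<alpha> \<subseteq> {..<k} \<and> card \<alpha> \<ge> 2}"

definition in_VB :: "nat \<Rightarrow> (nat set \<Rightarrow> real) \<Rightarrow> bool" where
  "in_VB k z \<longleftrightarrow> (\<forall>\<gamma>. \<not> \<gamma> \<subseteq> {..<k} \<longrightarrow> z \<gamma> = 0) \<and>
     (\<exists>c :: nat set \<Rightarrow> real. \<forall>\<gamma>\<subseteq>{..<k}.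
        z \<gamma> = (\<Sum>\<alpha>\<in>Bset k. c \<alpha> * (-1) ^ card (\<alpha> \<inter> \<gamma>)))"

definition sqnorm :: "nat \<Rightarrow> nat \<Rightarrow> (nat \<Rightarrow> nat set \<Rightarrow> real) \<Rightarrow> real" where
  "sqnorm k j y = (\<Sum>l<j. \<Sum>\<gamma>\<in>Pow {..<k}. (y l \<gamma>)^2)"

definition SU :: "nat \<Rightarrow> nat \<Rightarrow> (nat \<Rightarrow> nat set \<Rightarrow> real) set" where
  "SU k j = {y. (\<forall>l<j. in_Uk k (y l)) \<and> (\<forall>l\<ge>j. y l = (\<lambda>_. 0)) \<and> sqnorm k j y = 1}"

text \<open>S(U_k^(oplus (j-1)) oplus (oplus_(alpha in B) V_alpha)), realised inside
  U_k^(oplus j) with the last summand (index j-1) in the B-subspace.\<close>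
definition SUB :: "nat \<Rightarrow> nat \<Rightarrow> (nat \<Rightarrow> nat set \<Rightarrow> real) set" where
  "SUB k j = {y. (\<forall>l<j - 1. in_Uk k (y l)) \<and> in_VB k (y (j - 1)) \<and>
                 (\<forall>l\<ge>j. y l = (\<lambda>_. 0)) \<and> sqnorm k j y = 1}"

definition equivariant_map ::
  "nat \<Rightarrow> (nat \<Rightarrow> nat \<Rightarrow> real) set \<Rightarrow> (nat \<Rightarrow> nat set \<Rightarrow> real) set
     \<Rightarrow> ((nat \<Rightarrow> nat \<Rightarrow> real) \<Rightarrow> (nat \<Rightarrow> nat set \<Rightarrow> real)) \<Rightarrow> bool" where
  "equivariant_map k X A f \<longleftrightarrow> continuous_on X f \<and> f ` X \<subseteq> A \<and>
     (\<forall>g\<in>Wgroup k. \<forall>x\<in>X. f (actY k g x) = actU k g (f x))"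

end

theory Submission
  imports Defs
begin

lemma glue_cont:
  fixes \<rho> H :: "'a::topological_space \<Rightarrow> real"
  assumes r: "continuous_on S \<rho>" and h: "continuous_on (S \<inter> {x. \<rho> x \<noteq> 0}) H"
    and b: "\<And>x. x \<in> S \<Longrightarrow> \<rho> x \<noteq> 0 \<Longrightarrow> \<bar>H x\<bar> \<le> B"
  shows "continuous_on S (\<lambda>x. \<rho> x * H x)"
  unfolding continuous_on_def
proof
  fix x0 assume x0: "x0 \<in> S"
  show "((\<lambda>x. \<rho> x * H x) \<longlongrightarrow> \<rho> x0 * H x0) (at x0 within S)"
  proof (cases "\<rho> x0 = 0")
    case True
    have "((\<lambda>x. B * \<bar>\<rho> x\<bar>) \<longlongrightarrow> B * \<bar>0\<bar>) (at x0 within S)"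
      using r x0 True unfolding continuous_on_def
      by (intro tendsto_intros) force
    moreover have "eventually (\<lambda>x. norm (\<rho> x * H x) \<le> B * \<bar>\<rho> x\<bar>) (at x0 within S)"
      unfolding eventually_at_filter
    proof (rule always_eventually, intro allI impI)
      fix x assume "x \<in> S"
      show "norm (\<rho> x * H x) \<le> B * \<bar>\<rho> x\<bar>"
      proof (cases "\<rho> x = 0")
        case False
        then have "\<bar>H x\<bar> \<le> B" using b \<open>x \<in> S\<close> by auto
        then show ?thesis by (simp add: abs_mult mult.commute mult_right_mono)
      next
        case True
        then show ?thesis by simp
      qed
    qed
    ultimately have "((\<lambda>x. \<rho> x * H x) \<longlongrightarrow> 0) (at x0 within S)"
      using Lim_null_comparison[of "\<lambda>x. \<rho> x * H x" "\<lambda>x. B * \<bar>\<rho> x\<bar>"] by simp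
    then show ?thesis using True by simp
  next
    case False
    obtain A where A: "open A" "A \<inter> S = \<rho> -` (- {0}) \<inter> S"
      using r unfolding continuous_on_open_invariant by (meson open_Compl closed_singleton)
    have x0A: "x0 \<in> A" using A x0 False by auto
    have eq: "at x0 within S = at x0 within (S \<inter> {x. \<rho> x \<noteq> 0})"
      by (rule at_within_nhd[OF x0A A(1)]) (use A in auto)
    have "continuous_on (S \<inter> {x. \<rho> x \<noteq> 0}) (\<lambda>x. \<rho> x * H x)"
      by (intro continuous_intros h continuous_on_subset[OF r]) auto
    then show ?thesis unfolding eq continuous_on_def using x0 False by auto
  qed
qed

lemma sgn_card: "sgn_bool (i\<in>\<gamma>) = (-1::real)^card({i}\<inter>\<gamma>)"
  by (cases "i \<in> \<gamma>") (auto simp: sgn_bool_def)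

lemma char_mult:
  assumes "finite A" "finite B"
  shows "(-1::real)^card(A\<inter>\<gamma>) * (-1)^card(B\<inter>\<gamma>) = (-1)^card(symdiff A B \<inter> \<gamma>)"
proof -
  let ?X = "A\<inter>\<gamma>" and ?Y = "B\<inter>\<gamma>"
  have f: "finite ?X" "finite ?Y" using assms by auto
  have 1: "card ?X + card ?Y = card (?X \<union> ?Y) + card (?X \<inter> ?Y)"
    using card_Un_Int[OF f] by simp
  have e: "symdiff A B \<inter> \<gamma> = (?X \<union> ?Y) - (?X \<inter> ?Y)" by (auto simp: symdiff_def)
  have 2: "card (symdiff A B \<inter> \<gamma>) = card (?X \<union> ?Y) - card (?X \<inter> ?Y)"
    unfolding e by (rule card_Diff_subset) (use f in auto)
  have 3: "card (?X \<inter> ?Y) \<le> card (?X \<union> ?Y)" by (rule card_mono) (use f in auto)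
  have "card ?X + card ?Y = card (symdiff A B \<inter> \<gamma>) + 2 * card (?X \<inter> ?Y)"
    using 1 2 3 by simp
  then have "(-1::real)^card(A\<inter>\<gamma>) * (-1)^card(B\<inter>\<gamma>) = (-1)^(card (symdiff A B \<inter> \<gamma>) + 2 * card (?X \<inter> ?Y))"
    by (simp only: power_add[symmetric])
  then show ?thesis by (simp add: power_add power_mult)
qed

lemma char_sum:
  assumes "finite K" "A \<subseteq> K" "A \<noteq> {}"
  shows "(\<Sum>\<gamma>\<in>Pow K. (-1::real)^card(A\<inter>\<gamma>)) = 0"
proof -
  obtain a where a: "a \<in> A" using assms by auto
  define K' where "K' = K - {a}"
  have K: "K = insert a K'" "a \<notin> K'" using a assms K'_def by auto
  have fK': "finite K'" using assms K'_def by auto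
  have disj: "Pow K' \<inter> insert a ` Pow K' = {}" using K by auto
  have inj: "inj_on (insert a) (Pow K')" using K by (auto simp: inj_on_def)
  have c: "\<gamma> \<in> Pow K' \<Longrightarrow> card (A \<inter> insert a \<gamma>) = Suc (card (A \<inter> \<gamma>))" for \<gamma>
  proof -
    assume "\<gamma> \<in> Pow K'"
    then have "a \<notin> A \<inter> \<gamma>" using K by auto
    moreover have "A \<inter> insert a \<gamma> = insert a (A \<inter> \<gamma>)" using a by auto
    ultimately show ?thesis using fK' \<open>\<gamma> \<in> Pow K'\<close>
      by (simp add: finite_subset[of _ K'])
  qed
  have "(\<Sum>\<gamma>\<in>Pow K. (-1::real)^card(A\<inter>\<gamma>))
      = (\<Sum>\<gamma>\<in>Pow K'. (-1::real)^card(A\<inter>\<gamma>)) + (\<Sum>\<gamma>\<in>insert a ` Pow K'. (-1::real)^card(A\<inter>\<gamma>))"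
    unfolding K(1) Pow_insert by (rule sum.union_disjoint) (use fK' disj in auto)
  also have "(\<Sum>\<gamma>\<in>insert a ` Pow K'. (-1::real)^card(A\<inter>\<gamma>)) = (\<Sum>\<gamma>\<in>Pow K'. (-1::real)^card(A\<inter>insert a \<gamma>))"
    by (rule sum.reindex[OF inj, unfolded comp_def])
  also have "\<dots> = (\<Sum>\<gamma>\<in>Pow K'. - ((-1::real)^card(A\<inter>\<gamma>)))"
    by (rule sum.cong) (auto simp: c)
  finally show ?thesis by (simp add: sum_negf)
qed

lemma THE_act:
  assumes g: "(\<beta>,\<tau>) \<in> Wgroup k" and \<gamma>: "\<gamma> \<subseteq> {..<k}"
  shows "(THE \<delta>. \<delta> \<subseteq> {..<k} \<and> act_idx (\<beta>,\<tau>) \<delta> = \<gamma>) = inv \<tau> ` symdiff \<beta> \<gamma>"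
proof (rule the_equality)
  have p: "\<tau> permutes {..<k}" and b: "\<beta> \<subseteq> {..<k}" using g by (auto simp: Wgroup_def)
  have ip: "inv \<tau> permutes {..<k}" using permutes_inv[OF p] .
  have sd: "symdiff \<beta> \<gamma> \<subseteq> {..<k}" using b \<gamma> by (auto simp: symdiff_def)
  show "inv \<tau> ` symdiff \<beta> \<gamma> \<subseteq> {..<k} \<and> act_idx (\<beta>, \<tau>) (inv \<tau> ` symdiff \<beta> \<gamma>) = \<gamma>"
  proof
    show "inv \<tau> ` symdiff \<beta> \<gamma> \<subseteq> {..<k}" using sd permutes_image[OF ip] by auto
    have "\<tau> ` inv \<tau> ` symdiff \<beta> \<gamma> = symdiff \<beta> \<gamma>"
      by (simp add: image_comp permutes_inverses(1)[OF p] comp_def)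
    then show "act_idx (\<beta>, \<tau>) (inv \<tau> ` symdiff \<beta> \<gamma>) = \<gamma>"
      by (auto simp: act_idx_def symdiff_def)
  qed
  fix \<delta> assume "\<delta> \<subseteq> {..<k} \<and> act_idx (\<beta>, \<tau>) \<delta> = \<gamma>"
  then have "symdiff \<beta> (\<tau> ` \<delta>) = \<gamma>" by (simp add: act_idx_def)
  then have "\<tau> ` \<delta> = symdiff \<beta> \<gamma>" by (auto simp: symdiff_def)
  then have "inv \<tau> ` \<tau> ` \<delta> = inv \<tau> ` symdiff \<beta> \<gamma>" by simp
  then show "\<delta> = inv \<tau> ` symdiff \<beta> \<gamma>"
    by (simp add: image_comp permutes_inverses(2)[OF p] comp_def)
qed

lemma bij_act:
  assumes g: "(\<beta>,\<tau>) \<in> Wgroup k"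
  shows "bij_betw (\<lambda>\<gamma>. inv \<tau> ` symdiff \<beta> \<gamma>) (Pow {..<k}) (Pow {..<k})"
proof -
  have p: "\<tau> permutes {..<k}" and b: "\<beta> \<subseteq> {..<k}" using g by (auto simp: Wgroup_def)
  have ip: "inv \<tau> permutes {..<k}" using permutes_inv[OF p] .
  show ?thesis
  proof (rule bij_betw_byWitness[where f'="\<lambda>\<delta>. symdiff \<beta> (\<tau> ` \<delta>)"])
    show "\<forall>a\<in>Pow {..<k}. symdiff \<beta> (\<tau> ` (inv \<tau> ` symdiff \<beta> a)) = a"
      by (auto simp: image_comp permutes_inverses(1)[OF p] comp_def symdiff_def)
    show "\<forall>a'\<in>Pow {..<k}. inv \<tau> ` symdiff \<beta> (symdiff \<beta> (\<tau> ` a')) = a'"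
    proof
      fix a' :: "nat set"
      have "symdiff \<beta> (symdiff \<beta> (\<tau> ` a')) = \<tau> ` a'" by (auto simp: symdiff_def)
      then show "inv \<tau> ` symdiff \<beta> (symdiff \<beta> (\<tau> ` a')) = a'"
        by (simp add: image_comp permutes_inverses(2)[OF p] comp_def)
    qed
    show "(\<lambda>\<gamma>. inv \<tau> ` symdiff \<beta> \<gamma>) ` Pow {..<k} \<subseteq> Pow {..<k}"
      using b permutes_image[OF ip] by (auto simp: symdiff_def)
    show "(\<lambda>\<delta>. symdiff \<beta> (\<tau> ` \<delta>)) ` Pow {..<k} \<subseteq> Pow {..<k}"
      using b permutes_image[OF p] by (auto simp: symdiff_def)
  qed
qed

lemma actU_eq:
  assumes g: "(\<beta>,\<tau>) \<in> Wgroup k"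
  shows "actU k (\<beta>,\<tau>) y l \<gamma> = (if \<gamma> \<subseteq> {..<k} then y l (inv \<tau> ` symdiff \<beta> \<gamma>) else 0)"
  using THE_act[OF g] by (simp add: actU_def)

lemma sqnorm_actU:
  assumes g: "g \<in> Wgroup k"
  shows "sqnorm k j (actU k g y) = sqnorm k j y"
proof -
  obtain \<beta> \<tau> where gg: "g = (\<beta>,\<tau>)" by fastforce
  have "(\<Sum>\<gamma>\<in>Pow {..<k}. (actU k g y l \<gamma>)^2) = (\<Sum>\<gamma>\<in>Pow {..<k}. (y l \<gamma>)^2)" for l
  proof -
    have "(\<Sum>\<gamma>\<in>Pow {..<k}. (actU k g y l \<gamma>)^2) = (\<Sum>\<gamma>\<in>Pow {..<k}. (y l (inv \<tau> ` symdiff \<beta> \<gamma>))^2)"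
      using actU_eq[of \<beta> \<tau> k y l] g gg by (intro sum.cong) auto
    also have "\<dots> = (\<Sum>\<gamma>\<in>Pow {..<k}. (y l \<gamma>)^2)"
      using sum.reindex_bij_betw[OF bij_act[of \<beta> \<tau> k], of "\<lambda>\<delta>. (y l \<delta>)^2"] g gg by simp
    finally show ?thesis .
  qed
  then show ?thesis by (simp add: sqnorm_def)
qed

lemma actU_scale: "actU k g (\<lambda>l \<gamma>. c * y l \<gamma>) = (\<lambda>l \<gamma>. c * actU k g y l \<gamma>)"
  by (simp add: actU_def fun_eq_iff)

definition rr :: "nat \<Rightarrow> (nat \<Rightarrow> nat \<Rightarrow> real) \<Rightarrow> nat \<Rightarrow> real" where
  "rr d x i = sqrt (\<Sum>t<d. (x i t)^2)"
definition rho :: "nat \<Rightarrow> nat \<Rightarrow> (nat \<Rightarrow> nat \<Rightarrow> real) \<Rightarrow> real" where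
  "rho k d x = (\<Prod>i<k. rr d x i)"
definition Pm :: "nat \<Rightarrow> nat \<Rightarrow> (nat \<Rightarrow> nat \<Rightarrow> real) \<Rightarrow> (nat \<Rightarrow> nat \<Rightarrow> real)" where
  "Pm k d x = (\<lambda>i t. if i < k \<and> t < d then x i t / rr d x i else 0)"
definition ww :: "nat \<Rightarrow> nat \<Rightarrow> (nat \<Rightarrow> nat \<Rightarrow> real) \<Rightarrow> nat set \<Rightarrow> real" where
  "ww k d x = (\<lambda>\<gamma>. \<Sum>i<k. x i d * sgn_bool (i \<in> \<gamma>))"
definition GG where
  "GG k d j f x = (\<lambda>l \<gamma>. if l < j \<and> \<gamma> \<subseteq> {..<k}
      then rho k d x * f (Pm k d x) l \<gamma> + (if l = j - 1 then ww k d x \<gamma> else 0) else 0)"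
definition FF where
  "FF k d j f x = (\<lambda>l \<gamma>. GG k d j f x l \<gamma> / sqrt (sqnorm k j (GG k d j f x)))"

lemma rr_nonneg: "rr d x i \<ge> 0" unfolding rr_def by (intro real_sqrt_ge_zero sum_nonneg) simp

lemma rr_sq: "(rr d x i)^2 = (\<Sum>t<d. (x i t)^2)"
  unfolding rr_def by (rule real_sqrt_pow2) (intro sum_nonneg, simp)

lemma Yspace_sum: "x \<in> Yspace d k \<Longrightarrow> i < k \<Longrightarrow> (x i d)^2 + (\<Sum>t<d. (x i t)^2) = 1"
  by (auto simp: Yspace_def sphere_pts_def lessThan_Suc_atMost[symmetric])

lemma rho_ne: "rho k d x \<noteq> 0 \<Longrightarrow> i < k \<Longrightarrow> rr d x i \<noteq> 0"
  by (auto simp: rho_def)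

lemma Pm_in:
  assumes x: "x \<in> Yspace d k" and r: "rho k d x \<noteq> 0"
  shows "Pm k d x \<in> Yequator d k"
proof -
  have "Pm k d x i \<in> sphere_pts d" if i: "i < k" for i
  proof -
    have ne: "rr d x i \<noteq> 0" using rho_ne[OF r i] .
    have "(\<Sum>t\<le>d. (Pm k d x i t)^2) = (\<Sum>t<d. (Pm k d x i t)^2)"
      by (simp add: lessThan_Suc_atMost[symmetric] Pm_def)
    also have "\<dots> = (\<Sum>t<d. (x i t)^2) / (rr d x i)^2"
      using i by (simp add: Pm_def power_divide sum_divide_distrib)
    also have "\<dots> = 1" using ne rr_sq[of d x i] by (metis divide_self power_not_zero)
    finally show ?thesis by (auto simp: sphere_pts_def Pm_def)
  qed
  then show ?thesis by (auto simp: Yequator_def Yspace_def Pm_def fun_eq_iff)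
qed

lemma SUB_bound:
  assumes "y \<in> SUB k j" "l < j" "\<gamma> \<subseteq> {..<k}"
  shows "\<bar>y l \<gamma>\<bar> \<le> 1"
proof -
  have "(y l \<gamma>)^2 \<le> (\<Sum>\<gamma>\<in>Pow {..<k}. (y l \<gamma>)^2)"
    by (rule member_le_sum) (use assms in auto)
  also have "\<dots> \<le> sqnorm k j y" unfolding sqnorm_def
    by (rule member_le_sum[where f="\<lambda>l. \<Sum>\<gamma>\<in>Pow {..<k}. (y l \<gamma>)^2"]) (use assms in \<open>auto intro: sum_nonneg\<close>)
  also have "\<dots> = 1" using assms by (simp add: SUB_def)
  finally show ?thesis by (simp add: abs_square_le_1)
qed

lemma ww_sum: "(\<Sum>\<gamma>\<in>Pow {..<k}. ww k d x \<gamma>) = 0"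
proof -
  have "(\<Sum>\<gamma>\<in>Pow {..<k}. ww k d x \<gamma>) = (\<Sum>i<k. x i d * (\<Sum>\<gamma>\<in>Pow {..<k}. (-1::real)^card({i}\<inter>\<gamma>)))"
    unfolding ww_def sgn_card by (simp add: sum.swap[of _ "Pow {..<k}"] sum_distrib_left)
  also have "\<dots> = 0" by (intro sum.neutral ballI) (simp add: char_sum)
  finally show ?thesis .
qed

lemma ww_orth:
  assumes i0: "i0 < k"
  shows "(\<Sum>\<gamma>\<in>Pow {..<k}. ww k d x \<gamma> * sgn_bool (i0 \<in> \<gamma>)) = 2^k * x i0 d"
proof -
  have "(\<Sum>\<gamma>\<in>Pow {..<k}. ww k d x \<gamma> * sgn_bool (i0 \<in> \<gamma>))
      = (\<Sum>i<k. x i d * (\<Sum>\<gamma>\<in>Pow {..<k}. (-1::real)^card({i}\<inter>\<gamma>) * (-1::real)^card({i0}\<inter>\<gamma>)))"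
    unfolding ww_def sgn_card
    by (simp add: sum.swap[of _ "Pow {..<k}"] sum_distrib_left sum_distrib_right mult.assoc)
  also have "\<dots> = (\<Sum>i<k. x i d * (if i = i0 then 2^k else 0))"
  proof (intro sum.cong refl)
    fix i assume i: "i \<in> {..<k}"
    have "(\<Sum>\<gamma>\<in>Pow {..<k}. (-1::real)^card({i}\<inter>\<gamma>) * (-1::real)^card({i0}\<inter>\<gamma>))
        = (\<Sum>\<gamma>\<in>Pow {..<k}. (-1::real)^card(symdiff {i} {i0} \<inter>\<gamma>))"
      by (simp add: char_mult)
    also have "\<dots> = (if i = i0 then 2^k else 0)"
    proof (cases "i = i0")
      case True
      then have "symdiff {i} {i0} = {}" by (simp add: symdiff_def)
      then show ?thesis using True by (simp add: card_Pow)
    next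
      case False
      then show ?thesis using i i0 by (subst char_sum) (auto simp: symdiff_def)
    qed
    finally show "x i d * (\<Sum>\<gamma>\<in>Pow {..<k}. (-1::real)^card({i}\<inter>\<gamma>) * (-1::real)^card({i0}\<inter>\<gamma>))
       = x i d * (if i = i0 then 2^k else 0)" by simp
  qed
  also have "\<dots> = 2^k * x i0 d" using i0 by (simp add: mult_ac if_distrib[of "\<lambda>v. x _ d * v"] sum.delta cong: if_cong)
  finally show ?thesis .
qed

lemma Bset_fin: "finite (Bset k)"
  by (rule finite_subset[of _ "Pow {..<k}"]) (auto simp: Bset_def)

lemma VB_sum:
  assumes "in_VB k z"
  shows "(\<Sum>\<gamma>\<in>Pow {..<k}. z \<gamma>) = 0"
proof -
  obtain c where c: "\<forall>\<gamma>\<subseteq>{..<k}. z \<gamma> = (\<Sum>\<alpha>\<in>Bset k. c \<alpha> * (-1) ^ card (\<alpha> \<inter> \<gamma>))"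
    using assms by (auto simp: in_VB_def)
  have "(\<Sum>\<gamma>\<in>Pow {..<k}. z \<gamma>) = (\<Sum>\<gamma>\<in>Pow {..<k}. \<Sum>\<alpha>\<in>Bset k. c \<alpha> * (-1) ^ card (\<alpha> \<inter> \<gamma>))"
    using c by (intro sum.cong) auto
  also have "\<dots> = (\<Sum>\<alpha>\<in>Bset k. c \<alpha> * (\<Sum>\<gamma>\<in>Pow {..<k}. (-1) ^ card (\<alpha> \<inter> \<gamma>)))"
    by (simp add: sum.swap[of _ "Pow {..<k}"] sum_distrib_left)
  also have "\<dots> = 0"
  proof (intro sum.neutral ballI)
    fix \<alpha> assume a: "\<alpha> \<in> Bset k"
    then have "\<alpha> \<noteq> {}" "\<alpha> \<subseteq> {..<k}" by (auto simp: Bset_def)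
    then show "c \<alpha> * (\<Sum>\<gamma>\<in>Pow {..<k}. (-1::real) ^ card (\<alpha> \<inter> \<gamma>)) = 0" by (simp add: char_sum)
  qed
  finally show ?thesis .
qed

lemma VB_orth:
  assumes "in_VB k z" "i0 < k"
  shows "(\<Sum>\<gamma>\<in>Pow {..<k}. z \<gamma> * sgn_bool (i0 \<in> \<gamma>)) = 0"
proof -
  obtain c where c: "\<forall>\<gamma>\<subseteq>{..<k}. z \<gamma> = (\<Sum>\<alpha>\<in>Bset k. c \<alpha> * (-1) ^ card (\<alpha> \<inter> \<gamma>))"
    using assms by (auto simp: in_VB_def)
  have "(\<Sum>\<gamma>\<in>Pow {..<k}. z \<gamma> * sgn_bool (i0 \<in> \<gamma>)) = (\<Sum>\<gamma>\<in>Pow {..<k}. \<Sum>\<alpha>\<in>Bset k. c \<alpha> * ((-1) ^ card (\<alpha> \<inter> \<gamma>) * (-1)^card({i0}\<inter>\<gamma>)))"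
    using c by (intro sum.cong) (auto simp: sgn_card sum_distrib_right mult.assoc)
  also have "\<dots> = (\<Sum>\<alpha>\<in>Bset k. c \<alpha> * (\<Sum>\<gamma>\<in>Pow {..<k}. (-1) ^ card (symdiff \<alpha> {i0} \<inter> \<gamma>)))"
  proof -
    have "\<alpha> \<in> Bset k \<Longrightarrow> (-1::real) ^ card (\<alpha> \<inter> \<gamma>) * (-1)^card({i0}\<inter>\<gamma>) = (-1) ^ card (symdiff \<alpha> {i0} \<inter> \<gamma>)" for \<alpha> \<gamma>
      by (rule char_mult) (auto simp: Bset_def finite_subset)
    then show ?thesis
      by (simp add: sum.swap[of _ "Pow {..<k}"] sum_distrib_left)
  qed
  also have "\<dots> = 0"
  proof (intro sum.neutral ballI)
    fix \<alpha> assume a: "\<alpha> \<in> Bset k"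
    then have s: "\<alpha> \<subseteq> {..<k}" "card \<alpha> \<ge> 2" by (auto simp: Bset_def)
    have "symdiff \<alpha> {i0} \<noteq> {}"
    proof
      assume "symdiff \<alpha> {i0} = {}"
      then have "\<alpha> = {i0}" by (auto simp: symdiff_def)
      then show False using s by simp
    qed
    moreover have "symdiff \<alpha> {i0} \<subseteq> {..<k}" using s assms by (auto simp: symdiff_def)
    ultimately show "c \<alpha> * (\<Sum>\<gamma>\<in>Pow {..<k}. (-1::real) ^ card (symdiff \<alpha> {i0} \<inter> \<gamma>)) = 0"
      by (simp add: char_sum)
  qed
  finally show ?thesis .
qed

lemma sgn_sq [simp]: "(sgn_bool b)^2 = 1"
  by (simp add: sgn_bool_def)

lemma rr_act:
  assumes "i < k"
  shows "rr d (actY k (\<beta>,\<tau>) x) i = rr d x (inv \<tau> i)"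
  using assms by (simp add: rr_def actY_def power_mult_distrib)

lemma inv_bij:
  assumes "(\<beta>,\<tau>) \<in> Wgroup k"
  shows "bij_betw (inv \<tau>) {..<k} {..<k}" "\<And>i. i < k \<Longrightarrow> inv \<tau> i < k"
proof -
  have p: "inv \<tau> permutes {..<k}" using assms permutes_inv by (auto simp: Wgroup_def)
  show "bij_betw (inv \<tau>) {..<k} {..<k}" using permutes_imp_bij[OF p] .
  show "\<And>i. i < k \<Longrightarrow> inv \<tau> i < k" using permutes_in_image[OF p] by auto
qed

lemma rho_act:
  assumes g: "(\<beta>,\<tau>) \<in> Wgroup k"
  shows "rho k d (actY k (\<beta>,\<tau>) x) = rho k d x"
proof -
  have "rho k d (actY k (\<beta>,\<tau>) x) = (\<Prod>i<k. rr d x (inv \<tau> i))"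
    unfolding rho_def by (intro prod.cong) (auto simp: rr_act)
  also have "\<dots> = rho k d x"
    unfolding rho_def using prod.reindex_bij_betw[OF inv_bij(1)[OF g], of "rr d x"] by simp
  finally show ?thesis .
qed

lemma Pm_act:
  assumes g: "(\<beta>,\<tau>) \<in> Wgroup k"
  shows "Pm k d (actY k (\<beta>,\<tau>) x) = actY k (\<beta>,\<tau>) (Pm k d x)"
  using inv_bij(2)[OF g] unfolding fun_eq_iff
  apply (intro allI)
  subgoal for i t by (cases "i < k") (simp_all add: Pm_def rr_act, simp_all add: actY_def)
  done

lemma sgn_symdiff: "sgn_bool (i \<in> symdiff A B) = sgn_bool (i \<in> A) * sgn_bool (i \<in> B)"
  by (auto simp: sgn_bool_def symdiff_def)

lemma ww_act:
  assumes g: "(\<beta>,\<tau>) \<in> Wgroup k"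
  shows "ww k d (actY k (\<beta>,\<tau>) x) \<gamma> = ww k d x (inv \<tau> ` symdiff \<beta> \<gamma>)"
proof -
  have inj: "inj (inv \<tau>)" using g permutes_inv[THEN permutes_inj] by (auto simp: Wgroup_def)
  have "ww k d x (inv \<tau> ` symdiff \<beta> \<gamma>) = (\<Sum>i<k. x (inv \<tau> i) d * sgn_bool (inv \<tau> i \<in> inv \<tau> ` symdiff \<beta> \<gamma>))"
    unfolding ww_def using sum.reindex_bij_betw[OF inv_bij(1)[OF g], of "\<lambda>i. x i d * sgn_bool (i \<in> inv \<tau> ` symdiff \<beta> \<gamma>)"]
    by simp
  also have "\<dots> = (\<Sum>i<k. x (inv \<tau> i) d * sgn_bool (i \<in> symdiff \<beta> \<gamma>))"
    using inj by (simp add: inj_image_mem_iff)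
  also have "\<dots> = ww k d (actY k (\<beta>,\<tau>) x) \<gamma>"
    unfolding ww_def actY_def by (intro sum.cong) (auto simp: sgn_symdiff)
  finally show ?thesis by simp
qed

lemma coord2: "continuous_on S (\<lambda>x::nat\<Rightarrow>nat\<Rightarrow>real. x i t)"
  by (intro continuous_on_product_then_coordinatewise[where f="\<lambda>x. x i"]
      continuous_on_product_then_coordinatewise[where f="\<lambda>x. x"] continuous_on_id)

lemma rr_cont: "continuous_on S (\<lambda>x. rr d x i)"
  unfolding rr_def by (intro continuous_intros coord2)

lemma rho_cont: "continuous_on S (rho k d)"
  unfolding rho_def by (intro continuous_intros rr_cont)

lemma ww_cont: "continuous_on S (\<lambda>x. ww k d x \<gamma>)"
  unfolding ww_def by (intro continuous_intros coord2)

lemma Pm_cont: "continuous_on (S \<inter> {x. rho k d x \<noteq> 0}) (Pm k d)"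
proof (intro continuous_on_coordinatewise_then_product)
  fix i t
  show "continuous_on (S \<inter> {x. rho k d x \<noteq> 0}) (\<lambda>x. Pm k d x i t)"
  proof (cases "i < k \<and> t < d")
    case True
    then show ?thesis unfolding Pm_def
      by (simp, intro continuous_intros coord2 rr_cont) (auto dest: rho_ne)
  next
    case False
    then have e: "(\<lambda>x. Pm k d x i t) = (\<lambda>x. 0)" by (auto simp: Pm_def fun_eq_iff)
    show ?thesis by (subst e) (rule continuous_on_const)
  qed
qed

context
  fixes d k j :: nat and f :: "(nat \<Rightarrow> nat \<Rightarrow> real) \<Rightarrow> (nat \<Rightarrow> nat set \<Rightarrow> real)"
  assumes eqv: "equivariant_map k (Yequator d k) (SUB k j) f" and j1: "j \<ge> 1"
begin

lemma fP_in: "x \<in> Yspace d k \<Longrightarrow> rho k d x \<noteq> 0 \<Longrightarrow> f (Pm k d x) \<in> SUB k j"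
  using Pm_in eqv unfolding equivariant_map_def by blast

lemma GG_pos:
  assumes x: "x \<in> Yspace d k"
  shows "sqnorm k j (GG k d j f x) > 0"
proof -
  let ?G = "GG k d j f x"
  have nn: "sqnorm k j ?G \<ge> 0" unfolding sqnorm_def by (intro sum_nonneg) simp
  show ?thesis
  proof (rule ccontr)
    assume "\<not> ?thesis"
    with nn have z: "sqnorm k j ?G = 0" by simp
    have zero: "?G l \<gamma> = 0" if "l < j" "\<gamma> \<subseteq> {..<k}" for l \<gamma>
    proof -
      have "\<forall>l\<in>{..<j}. (\<Sum>\<gamma>\<in>Pow {..<k}. (?G l \<gamma>)^2) = 0" using z unfolding sqnorm_def
        by (subst sum_nonneg_eq_0_iff[symmetric]) (auto intro: sum_nonneg)
      then have "(\<Sum>\<gamma>\<in>Pow {..<k}. (?G l \<gamma>)^2) = 0" using that by auto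
      then have "\<forall>\<gamma>\<in>Pow {..<k}. (?G l \<gamma>)^2 = 0" by (subst (asm) sum_nonneg_eq_0_iff) auto
      then show ?thesis using that by auto
    qed
    show False
    proof (cases "\<forall>i<k. x i d = 0")
      case True
      have "rr d x i = 1" if "i < k" for i using Yspace_sum[OF x that] True that by (simp add: rr_def)
      then have r1: "rho k d x = 1" by (simp add: rho_def)
      have w0: "ww k d x \<gamma> = 0" for \<gamma> using True by (simp add: ww_def)
      have h: "f (Pm k d x) \<in> SUB k j" using fP_in x r1 by simp
      have "sqnorm k j ?G = sqnorm k j (f (Pm k d x))" unfolding sqnorm_def
        by (intro sum.cong refl) (simp add: GG_def r1 w0)
      then show False using z h by (simp add: SUB_def)
    next
      case False
      then obtain i0 where i0: "i0 < k" "x i0 d \<noteq> 0" by auto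
      let ?h = "f (Pm k d x) (j-1)"
      have A: "(\<Sum>\<gamma>\<in>Pow {..<k}. ?G (j-1) \<gamma> * sgn_bool (i0 \<in> \<gamma>)) = 0" using zero j1 by simp
      have "(\<Sum>\<gamma>\<in>Pow {..<k}. ?G (j-1) \<gamma> * sgn_bool (i0 \<in> \<gamma>))
          = (\<Sum>\<gamma>\<in>Pow {..<k}. rho k d x * (?h \<gamma> * sgn_bool (i0 \<in> \<gamma>)) + ww k d x \<gamma> * sgn_bool (i0 \<in> \<gamma>))"
        using j1 by (intro sum.cong refl) (simp add: GG_def algebra_simps)
      also have "\<dots> = rho k d x * (\<Sum>\<gamma>\<in>Pow {..<k}. ?h \<gamma> * sgn_bool (i0 \<in> \<gamma>)) + 2^k * x i0 d"
        by (simp add: sum.distrib sum_distrib_left ww_orth[OF i0(1)])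
      finally have B: "(\<Sum>\<gamma>\<in>Pow {..<k}. ?G (j-1) \<gamma> * sgn_bool (i0 \<in> \<gamma>))
          = rho k d x * (\<Sum>\<gamma>\<in>Pow {..<k}. ?h \<gamma> * sgn_bool (i0 \<in> \<gamma>)) + 2^k * x i0 d" .
      have C: "rho k d x * (\<Sum>\<gamma>\<in>Pow {..<k}. ?h \<gamma> * sgn_bool (i0 \<in> \<gamma>)) = 0"
      proof (cases "rho k d x = 0")
        case False
        then have "f (Pm k d x) \<in> SUB k j" using fP_in x by simp
        then have "in_VB k ?h" by (simp add: SUB_def)
        then show ?thesis using VB_orth i0 by simp
      qed simp
      from A B C have "2^k * x i0 d = 0" by (simp only:)
      with i0 show False by simp
    qed
  qed
qed


lemma FF_SU:
  assumes x: "x \<in> Yspace d k"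
  shows "FF k d j f x \<in> SU k j"
proof -
  let ?G = "GG k d j f x"
  define N where "N = sqnorm k j ?G"
  have N: "N > 0" using GG_pos x by (simp add: N_def)
  have FF: "FF k d j f x = (\<lambda>l \<gamma>. ?G l \<gamma> / sqrt N)" by (simp add: FF_def N_def)
  have sumG: "(\<Sum>\<gamma>\<in>Pow {..<k}. ?G l \<gamma>) = 0" if l: "l < j" for l
  proof -
    have "(\<Sum>\<gamma>\<in>Pow {..<k}. ?G l \<gamma>) = (\<Sum>\<gamma>\<in>Pow {..<k}. rho k d x * f (Pm k d x) l \<gamma> + (if l = j-1 then ww k d x \<gamma> else 0))"
      using l by (intro sum.cong refl) (simp add: GG_def)
    also have "\<dots> = rho k d x * (\<Sum>\<gamma>\<in>Pow {..<k}. f (Pm k d x) l \<gamma>)"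
      by (cases "l = j - 1") (simp_all add: sum.distrib sum_distrib_left ww_sum)
    also have "\<dots> = 0"
    proof (cases "rho k d x = 0")
      case False
      then have h: "f (Pm k d x) \<in> SUB k j" using fP_in x by simp
      show ?thesis
      proof (cases "l < j - 1")
        case True
        then show ?thesis using h by (simp add: SUB_def in_Uk_def)
      next
        case False
        then have "l = j - 1" using l by simp
        then show ?thesis using h VB_sum by (simp add: SUB_def)
      qed
    qed simp
    finally show ?thesis .
  qed
  have inU: "in_Uk k (\<lambda>\<gamma>. ?G l \<gamma> / sqrt N)" if "l < j" for l
    unfolding in_Uk_def using sumG[OF that]
    by (auto simp: GG_def sum_divide_distrib[symmetric])
  have out: "(\<lambda>\<gamma>. ?G l \<gamma> / sqrt N) = (\<lambda>_. 0)" if "l \<ge> j" for l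
    using that by (auto simp: GG_def fun_eq_iff)
  have "sqnorm k j (\<lambda>l \<gamma>. ?G l \<gamma> / sqrt N) = N / (sqrt N)^2"
    unfolding sqnorm_def N_def power_divide
    by (simp only: sum_divide_distrib[symmetric])
  also have "(sqrt N)^2 = N" using N by simp
  finally have "sqnorm k j (\<lambda>l \<gamma>. ?G l \<gamma> / sqrt N) = 1" using N by simp
  then show ?thesis unfolding FF SU_def using inU out by auto
qed


lemma fcont: "continuous_on (Yequator d k) f"
  using eqv by (simp add: equivariant_map_def)

lemma GG_cont: "continuous_on (Yspace d k) (\<lambda>x. GG k d j f x l \<gamma>)"
proof (cases "l < j \<and> \<gamma> \<subseteq> {..<k}")
  case True
  let ?S = "Yspace d k"
  have e: "(\<lambda>x. GG k d j f x l \<gamma>) = (\<lambda>x. rho k d x * f (Pm k d x) l \<gamma> + (if l = j-1 then ww k d x \<gamma> else 0))"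
    using True by (simp add: GG_def fun_eq_iff)
  have c1: "continuous_on (?S \<inter> {x. rho k d x \<noteq> 0}) (\<lambda>x. f (Pm k d x))"
  proof -
    have "continuous_on (?S \<inter> {x. rho k d x \<noteq> 0}) (f \<circ> Pm k d)"
      by (rule continuous_on_compose[OF Pm_cont continuous_on_subset[OF fcont]]) (auto intro: Pm_in)
    then show ?thesis by (simp add: comp_def)
  qed
  have c2: "continuous_on (?S \<inter> {x. rho k d x \<noteq> 0}) (\<lambda>x. f (Pm k d x) l \<gamma>)"
    by (intro continuous_on_product_then_coordinatewise[where f="\<lambda>x. f (Pm k d x) l"]
        continuous_on_product_then_coordinatewise[where f="\<lambda>x. f (Pm k d x)"] c1)
  have c3: "continuous_on ?S (\<lambda>x. rho k d x * f (Pm k d x) l \<gamma>)"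
    by (rule glue_cont[OF rho_cont c2, of 1]) (use True in \<open>auto intro: SUB_bound fP_in\<close>)
  have c4: "continuous_on ?S (\<lambda>x. if l = j-1 then ww k d x \<gamma> else 0)"
    by (cases "l = j - 1") (simp_all add: ww_cont)
  show ?thesis unfolding e by (rule continuous_on_add[OF c3 c4])
next
  case False
  then have e: "(\<lambda>x. GG k d j f x l \<gamma>) = (\<lambda>x. 0)" by (auto simp: GG_def fun_eq_iff)
  show ?thesis by (subst e) (rule continuous_on_const)
qed

lemma FF_cont: "continuous_on (Yspace d k) (FF k d j f)"
proof (intro continuous_on_coordinatewise_then_product)
  fix l \<gamma>
  have cN: "continuous_on (Yspace d k) (\<lambda>x. sqnorm k j (GG k d j f x))"
    unfolding sqnorm_def by (intro continuous_intros GG_cont)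
  show "continuous_on (Yspace d k) (\<lambda>x. FF k d j f x l \<gamma>)"
    unfolding FF_def
    by (intro continuous_on_divide GG_cont continuous_on_compose2[OF continuous_on_real_sqrt cN])
       (auto dest: GG_pos)
qed


lemma GG_act:
  assumes g: "g \<in> Wgroup k" and x: "x \<in> Yspace d k"
  shows "GG k d j f (actY k g x) = actU k g (GG k d j f x)"
proof -
  obtain \<beta> \<tau> where gg: "g = (\<beta>,\<tau>)" by fastforce
  have g': "(\<beta>,\<tau>) \<in> Wgroup k" using g gg by simp
  have "GG k d j f (actY k g x) l \<gamma> = actU k g (GG k d j f x) l \<gamma>" for l \<gamma>
  proof (cases "\<gamma> \<subseteq> {..<k}")
    case True
    define \<delta> where "\<delta> = inv \<tau> ` symdiff \<beta> \<gamma>"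
    have \<delta>: "\<delta> \<subseteq> {..<k}" using bij_betwE[OF bij_act[OF g']] True by (auto simp: \<delta>_def)
    have R: "actU k g (GG k d j f x) l \<gamma> = GG k d j f x l \<delta>"
      using actU_eq[OF g'] True gg by (simp add: \<delta>_def)
    have key: "rho k d x * f (Pm k d (actY k g x)) l' \<gamma> = rho k d x * f (Pm k d x) l' \<delta>" for l'
    proof (cases "rho k d x = 0")
      case False
      have P: "Pm k d x \<in> Yequator d k" using Pm_in[OF x False] .
      have "f (Pm k d (actY k g x)) = f (actY k g (Pm k d x))" using Pm_act[OF g'] gg by simp
      also have "\<dots> = actU k g (f (Pm k d x))" using eqv g P by (simp add: equivariant_map_def)
      finally have "f (Pm k d (actY k g x)) l' \<gamma> = f (Pm k d x) l' \<delta>"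
        using actU_eq[OF g'] True gg by (simp add: \<delta>_def)
      then show ?thesis by simp
    qed simp
    show ?thesis unfolding R using True \<delta> key rho_act[OF g'] ww_act[OF g'] gg
      by (simp add: GG_def \<delta>_def)
  next
    case False
    then show ?thesis using actU_eq[OF g'] gg by (simp add: GG_def)
  qed
  then show ?thesis by (simp add: fun_eq_iff)
qed

lemma FF_act:
  assumes g: "g \<in> Wgroup k" and x: "x \<in> Yspace d k"
  shows "FF k d j f (actY k g x) = actU k g (FF k d j f x)"
proof -
  define N where "N = sqnorm k j (GG k d j f x)"
  have e1: "FF k d j f x = (\<lambda>l \<gamma>. (1 / sqrt N) * GG k d j f x l \<gamma>)" by (simp add: FF_def N_def fun_eq_iff)
  have "FF k d j f (actY k g x) = (\<lambda>l \<gamma>. (1 / sqrt N) * actU k g (GG k d j f x) l \<gamma>)"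
    unfolding FF_def GG_act[OF g x] sqnorm_actU[OF g] N_def by (simp add: fun_eq_iff)
  also have "\<dots> = actU k g (FF k d j f x)" unfolding e1 actU_scale ..
  finally show ?thesis .
qed

lemma FF_equivariant: "equivariant_map k (Yspace d k) (SU k j) (FF k d j f)"
  unfolding equivariant_map_def using FF_cont FF_SU FF_act by blast

end

theorem proposition3p3:
  fixes d k j :: nat
  assumes "d \<ge> 1" and "k \<ge> 1" and "j \<ge> 1"
    and "\<not> (\<exists>f. equivariant_map k (Yspace d k) (SU k j) f)"
  shows "\<not> (\<exists>f. equivariant_map k (Yequator d k) (SUB k j) f)"
proof
  assume "\<exists>f. equivariant_map k (Yequator d k) (SUB k j) f"
  then obtain f where f: "equivariant_map k (Yequator d k) (SUB k j) f" by blast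
  have "equivariant_map k (Yspace d k) (SU k j) (FF k d j f)"
    by (rule FF_equivariant[OF f assms(3)])
  then show False using assms(4) by blast
qed

end
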